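(* Let $G$ be a $\mathbb{Z}$-weighted complete graph with $n\ge2$ vertices such that $$s\Big(\{G\}*\Big\{I\big(K_2\sqcup\textstyle\bigsqcup_{i=1}^{n-2}K_1\big)\Big\}\Big)=\{1,2,\dots,k\}$$ for some $k\ge1$ (equivalently, the set of edge weights of $G$ is exactly $\{1,\dots,k\}$). Let $l$ be the unique element of $s(\{I(K_n)\}*\{G\})$ (i.e. $l=s(G)$). Then $$\bigcup_{H} s(\{I(H)\}*\{G\})=\{0,1,\dots,l\},$$ where $H$ ranges over all simple graphs on a fixed $n$-element vertex set (spanning subgraphs of $K_n$).
   Context: Here $R=\mathbb{Z}$. An $R$-weighted complete graph $K$ is a finite vertex set with a weight $v_K(e)\in R$ on every 2-subset $e$. For such $H,G'$ with equal vertex counts and a bijection $f:V(H)\to V(G')$, $H*_fG'$ has vertex set $V(H)$ and weights $v_H(\{x,y\})v_{G'}(\{f(x),f(y)\})$; $H*G'=\{H*_fG': f \text{ bijection}\}$. $s(K)=\sum_e v_K(e)$, $s(\mathscr K)=\{s(K):K\in\mathscr K\}$. For a simple graph $H$, $I(H)$ has weight $1$ on edges and $0$ on non-edges. $K_2\sqcup\bigsqcup_{i=1}^{n-2}K_1$ is the graph on $n$ vertices with exactly one edge. *)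

theory Defs
  imports Main
begin

text \<open>An integer-weighted complete graph: a finite vertex set together with a
weight on every 2-subset (values of the weight function on other sets are irrelevant).\<close>
type_synonym 'a wgraph = "'a set \<times> ('a set \<Rightarrow> int)"

definition edges2 :: "'a set \<Rightarrow> 'a set set" where
  "edges2 V = {e. e \<subseteq> V \<and> card e = 2}"

definition wprod :: "'a wgraph \<Rightarrow> 'a wgraph \<Rightarrow> ('a \<Rightarrow> 'a) \<Rightarrow> 'a wgraph" where
  "wprod H G' f = (fst H, \<lambda>e. snd H e * snd G' (f ` e))"

definition wprods :: "'a wgraph \<Rightarrow> 'a wgraph \<Rightarrow> 'a wgraph set" where
  "wprods H G' = {wprod H G' f | f. bij_betw f (fst H) (fst G')}"

definition wprodset :: "'a wgraph set \<Rightarrow> 'a wgraph set \<Rightarrow> 'a wgraph set" where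
  "wprodset A B = (\<Union>H\<in>A. \<Union>G'\<in>B. wprods H G')"

definition wsum :: "'a wgraph \<Rightarrow> int" where
  "wsum K = (\<Sum>e\<in>edges2 (fst K). snd K e)"

definition wsums :: "'a wgraph set \<Rightarrow> int set" where
  "wsums A = wsum ` A"

definition indg :: "'a set \<Rightarrow> 'a set set \<Rightarrow> 'a wgraph" where
  "indg V E = (V, \<lambda>e. if e \<in> E then 1 else 0)"

end

theory Submission imports Defs "HOL-Combinatorics.Transposition" begin
lemma subset_sums:
  fixes T :: "'b set" and w :: "'b \<Rightarrow> int" and k :: int
  assumes "finite T" "\<forall>e\<in>T. 1 \<le> w e \<and> w e \<le> k" "{1..k} \<subseteq> w ` T"
  shows "(\<lambda>E. sum w E) ` Pow T = {0..sum w T}"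
  using assms
proof (induction "card T" arbitrary: T k rule: less_induct)
  case (less T k)
  show ?case
  proof (cases "T = {}")
    case True then show ?thesis by auto
  next
    case False
    then obtain e0 where "e0 \<in> T" by auto
    with less.prems have k1: "k \<ge> 1" by force
    then have "k \<in> w ` T" using less.prems(3) by auto
    then obtain e where eT: "e \<in> T" and we: "w e = k" by auto
    define T' where "T' = T - {e}"
    have fT': "finite T'" using less.prems(1) T'_def by auto
    have cT': "card T' < card T" using eT less.prems(1) T'_def by (metis card_Diff1_less)
    have Teq: "T = insert e T'" using eT T'_def by auto
    have nn: "\<forall>t\<in>T'. 0 \<le> w t" using less.prems(2) T'_def by force
    have IHr: "(\<lambda>E. sum w E) ` Pow T' = {0..sum w T'} \<and> sum w T' \<ge> k - 1"
    proof (cases "\<exists>e'\<in>T'. w e' = k")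
      case True
      then obtain e' where e': "e' \<in> T'" "w e' = k" by auto
      have cov: "{1..k} \<subseteq> w ` T'"
      proof
        fix j assume "j \<in> {1..k}"
        then obtain t where "t \<in> T" "w t = j" using less.prems(3) by auto
        then show "j \<in> w ` T'"
          using e' T'_def by (cases "t = e") (auto simp: we)
      qed
      have "(\<lambda>E. sum w E) ` Pow T' = {0..sum w T'}"
        using less.hyps[OF cT' fT' _ cov] less.prems(2) T'_def by auto
      moreover have "sum w T' \<ge> w e'"
        using member_le_sum[of e' T' w] e' nn fT' by auto
      ultimately show ?thesis using e' by auto
    next
      case False
      have bnd: "\<forall>t\<in>T'. 1 \<le> w t \<and> w t \<le> k - 1"
        using False less.prems(2) T'_def by force
      have cov: "{1..k-1} \<subseteq> w ` T'"
      proof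
        fix j assume j: "j \<in> {1..k-1}"
        then obtain t where "t \<in> T" "w t = j" using less.prems(3) by force
        then show "j \<in> w ` T'"
          using j T'_def we by (cases "t = e") auto
      qed
      have "(\<lambda>E. sum w E) ` Pow T' = {0..sum w T'}"
        using less.hyps[OF cT' fT' bnd cov] by auto
      moreover have "sum w T' \<ge> k - 1"
      proof (cases "k = 1")
        case True then show ?thesis using sum_nonneg nn by fastforce
      next
        case False
        then have "k - 1 \<in> w ` T'" using cov k1 by auto
        then obtain t where "t \<in> T'" "w t = k - 1" by auto
        then show ?thesis using member_le_sum[of t T' w] nn fT' by auto
      qed
      ultimately show ?thesis by auto
    qed
    have eT': "e \<notin> T'" using T'_def by auto
    have img: "(\<lambda>E. sum w E) ` Pow T = (\<lambda>E. sum w E) ` Pow T' \<union> (\<lambda>x. x + k) ` ((\<lambda>E. sum w E) ` Pow T')"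
    proof -
      have "\<And>E. E \<in> Pow T' \<Longrightarrow> sum w (insert e E) = sum w E + k"
        using eT' fT' we by (subst sum.insert) (auto intro: finite_subset)
      then show ?thesis unfolding Teq Pow_insert image_Un image_image by (auto simp: image_iff)
    qed
    have sT: "sum w T = sum w T' + k" using Teq eT' fT' we by simp
    show ?thesis
    proof -
      let ?S = "sum w T'"
      have "{0..?S} \<union> (\<lambda>x. x + k) ` {0..?S} = {0..?S + k}"
      proof (rule set_eqI)
        fix x
        show "x \<in> {0..?S} \<union> (\<lambda>x. x + k) ` {0..?S} \<longleftrightarrow> x \<in> {0..?S + k}"
        proof
          assume "x \<in> {0..?S} \<union> (\<lambda>x. x + k) ` {0..?S}"
          then show "x \<in> {0..?S + k}" using k1 by auto
        next
          assume x: "x \<in> {0..?S + k}"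
          show "x \<in> {0..?S} \<union> (\<lambda>x. x + k) ` {0..?S}"
          proof (cases "x \<le> ?S")
            case True then show ?thesis using x by auto
          next
            case False
            then have "x - k \<in> {0..?S}" using x conjunct2[OF IHr] by auto
            then have "x \<in> (\<lambda>x. x + k) ` {0..?S}" by (auto intro: image_eqI[of _ _ "x - k"])
            then show ?thesis by auto
          qed
        qed
      qed
      moreover have "sum w ` Pow T = {0..?S} \<union> (\<lambda>x. x + k) ` {0..?S}"
        using img conjunct1[OF IHr] by metis
      ultimately show ?thesis using sT by metis
    qed
  qed
qed

lemma fin_edges: "finite V \<Longrightarrow> finite (edges2 V)"
  unfolding edges2_def by (rule finite_subset[of _ "Pow V"]) auto

lemma edge_img:
  assumes "bij_betw f V V" "e \<in> edges2 V"
  shows "f ` e \<in> edges2 V"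
proof -
  have eV: "e \<subseteq> V" and c: "card e = 2" using assms(2) unfolding edges2_def by simp_all
  have inj: "inj_on f e" using inj_on_subset[OF bij_betw_imp_inj_on[OF assms(1)] eV] .
  have "f ` e \<subseteq> V" using image_mono[OF eV, of f] bij_betw_imp_surj_on[OF assms(1)] by simp
  then show ?thesis unfolding edges2_def using card_image[OF inj] c by simp
qed

lemma img_inj:
  assumes "bij_betw f V V"
  shows "inj_on ((`) f) (edges2 V)"
proof (rule inj_onI)
  fix x y assume x: "x \<in> edges2 V" and y: "y \<in> edges2 V" and xy: "f ` x = f ` y"
  have "x \<subseteq> V" using x unfolding edges2_def by simp
  moreover have "y \<subseteq> V" using y unfolding edges2_def by simp
  moreover have "inj_on f V" using bij_betw_imp_inj_on[OF assms] .
  ultimately show "x = y" using inj_on_image_eq_iff[of f V x y] xy by simp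
qed

lemma one_edge_sum:
  assumes "bij_betw f V V" "e0 \<in> edges2 V" "f ` e0 = {a, b}" "finite V"
  shows "wsum (wprod (V, w) (indg V {{a, b}}) f) = w e0"
proof -
  have "wsum (wprod (V, w) (indg V {{a, b}}) f) = (\<Sum>e\<in>edges2 V. w e * (if f ` e \<in> {{a, b}} then 1 else 0))"
    unfolding wsum_def wprod_def indg_def by (simp only: fst_conv snd_conv)
  also have "\<dots> = (\<Sum>e\<in>edges2 V. if e = e0 then w e else 0)"
  proof (rule sum.cong)
    fix e assume "e \<in> edges2 V"
    then have "f ` e = {a,b} \<longleftrightarrow> e = e0"
      using img_inj[OF assms(1)] assms(2,3) by (metis inj_on_eq_iff)
    then show "w e * (if f ` e \<in> {{a, b}} then 1 else 0) = (if e = e0 then w e else 0)" by auto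
  qed (rule refl)
  also have "\<dots> = w e0" using assms(2) fin_edges[OF assms(4)] by (simp add: sum.delta)
  finally show ?thesis .
qed

lemma subset_sum_f:
  assumes "bij_betw f V V" "E \<subseteq> edges2 V" "finite V"
  shows "wsum (wprod (indg V E) (V, w) f) = sum w ((`) f ` E)"
proof -
  have "wsum (wprod (indg V E) (V, w) f) = (\<Sum>e\<in>edges2 V. (if e \<in> E then 1 else 0) * w (f ` e))"
    unfolding wsum_def wprod_def indg_def by (simp only: fst_conv snd_conv)
  also have "\<dots> = (\<Sum>e\<in>edges2 V. if e \<in> E then w (f ` e) else 0)"
    by (rule sum.cong) auto
  also have "\<dots> = (\<Sum>e\<in>E. w (f ` e))"
    using assms(2) fin_edges[OF assms(3)] by (simp add: sum.If_cases Int_absorb1)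
  also have "\<dots> = sum w ((`) f ` E)"
    using sum.reindex[of "(`) f" E w] inj_on_subset[OF img_inj[OF assms(1)] assms(2)] by simp
  finally show ?thesis .
qed

lemma edge_to_ab:
  assumes "e \<in> edges2 V" "a \<in> V" "b \<in> V" "a \<noteq> b"
  shows "\<exists>f. bij_betw f V V \<and> f ` e = {a, b}"
proof -
  obtain x y where xy: "e = {x, y}" "x \<noteq> y" "x \<in> V" "y \<in> V"
    using assms(1) unfolding edges2_def by (auto simp: card_2_iff)
  define p where "p = transpose x a"
  define f where "f = transpose (p y) b \<circ> p"
  have py: "p y \<noteq> a" unfolding p_def using xy(2)
    by (metis transpose_apply_first transpose_eq_imp_eq)
  have pyV: "p y \<in> V" unfolding p_def using xy assms
    by (metis transpose_apply_first transpose_apply_other transpose_apply_second)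
  have "bij_betw p V V" unfolding p_def using xy assms by simp
  moreover have "bij_betw (transpose (p y) b) V V" using pyV assms by simp
  ultimately have "bij_betw f V V" unfolding f_def using bij_betw_trans by blast
  moreover have "f x = a" unfolding f_def p_def using py assms(4)
    by (simp add: p_def transpose_apply_other)
  moreover have "f y = b" unfolding f_def by simp
  ultimately show ?thesis using xy by auto
qed

theorem mainTheorem12:
  fixes V :: "'a set" and w :: "'a set \<Rightarrow> int" and n :: nat and k :: nat
    and a b :: 'a and l :: int
  assumes "finite V" and "card V = n" and "n \<ge> 2"
    and "a \<in> V" and "b \<in> V" and "a \<noteq> b"
    and "k \<ge> 1"
    and "wsums (wprodset {(V, w)} {indg V {{a, b}}}) = int ` {1..k}"
    and "wsums (wprodset {indg V (edges2 V)} {(V, w)}) = {l}"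
  shows "(\<Union>E\<in>Pow (edges2 V). wsums (wprodset {indg V E} {(V, w)})) = {0..l}"
proof -
  have fstI: "\<And>E. fst (indg V E) = V" unfolding indg_def by simp
  have A: "wsums (wprodset {(V, w)} {indg V {{a, b}}}) = w ` edges2 V"
  proof -
    have eq: "wsums (wprodset {(V, w)} {indg V {{a, b}}})
        = {wsum (wprod (V, w) (indg V {{a, b}}) f) | f. bij_betw f V V}"
      unfolding wsums_def wprodset_def wprods_def by (auto simp: fstI)
    have "{wsum (wprod (V, w) (indg V {{a, b}}) f) | f. bij_betw f V V} = w ` edges2 V"
    proof
      show "{wsum (wprod (V, w) (indg V {{a, b}}) f) | f. bij_betw f V V} \<subseteq> w ` edges2 V"
      proof clarify
        fix f assume bf: "bij_betw f V V"
        obtain e where e: "e \<in> edges2 V" "(`) f e = {a,b}"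
        proof -
          have "{a,b} \<in> edges2 V" using assms(4-6) unfolding edges2_def by auto
          moreover have "(`) f ` edges2 V = edges2 V"
          proof
            show "(`) f ` edges2 V \<subseteq> edges2 V" using edge_img[OF bf] by auto
            show "edges2 V \<subseteq> (`) f ` edges2 V"
              using img_inj[OF bf] edge_img[OF bf] fin_edges[OF assms(1)]
              by (metis endo_inj_surj image_subsetI order_refl)
          qed
          ultimately show ?thesis using that by (metis imageE)
        qed
        show "wsum (wprod (V, w) (indg V {{a, b}}) f) \<in> w ` edges2 V"
          using one_edge_sum[OF bf e(1) _ assms(1)] e by auto
      qed
      show "w ` edges2 V \<subseteq> {wsum (wprod (V, w) (indg V {{a, b}}) f) | f. bij_betw f V V}"
      proof
        fix x assume "x \<in> w ` edges2 V"
        then obtain e where e: "e \<in> edges2 V" "x = w e" by auto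
        obtain f where bf: "bij_betw f V V" and fe: "f ` e = {a,b}" using edge_to_ab[OF e(1) assms(4-6)] by auto
        have "x = wsum (wprod (V, w) (indg V {{a, b}}) f)"
          using one_edge_sum[OF bf e(1) fe assms(1)] e(2) by simp
        then show "x \<in> {wsum (wprod (V, w) (indg V {{a, b}}) f) | f. bij_betw f V V}"
          using bf by blast
      qed
    qed
    with eq show ?thesis by simp
  qed
  have W: "w ` edges2 V = {1..int k}"
    using A assms(8) by (simp add: image_int_atLeastAtMost)
  have L: "l = sum w (edges2 V)"
  proof -
    have "wsum (wprod (indg V (edges2 V)) (V, w) id) \<in> wsums (wprodset {indg V (edges2 V)} {(V, w)})"
      unfolding wsums_def wprodset_def wprods_def by (auto simp: fstI)
    then show ?thesis using assms(9) subset_sum_f[of id V "edges2 V" w] assms(1) by simp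
  qed
  have S: "sum w ` Pow (edges2 V) = {0..l}"
    unfolding L
    by (rule subset_sums[where k = "int k"]) (use fin_edges[OF assms(1)] W in auto)
  have "(\<Union>E\<in>Pow (edges2 V). wsums (wprodset {indg V E} {(V, w)})) = sum w ` Pow (edges2 V)"
  proof
    show "(\<Union>E\<in>Pow (edges2 V). wsums (wprodset {indg V E} {(V, w)})) \<subseteq> sum w ` Pow (edges2 V)"
    proof clarify
      fix E x assume E: "E \<subseteq> edges2 V" and x: "x \<in> wsums (wprodset {indg V E} {(V, w)})"
      then obtain f where bf: "bij_betw f V V" and "x = wsum (wprod (indg V E) (V, w) f)"
        unfolding wsums_def wprodset_def wprods_def by (auto simp: fstI)
      then have "x = sum w ((`) f ` E)" using subset_sum_f[OF bf E assms(1)] by simp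
      moreover have "(`) f ` E \<subseteq> edges2 V" using E edge_img[OF bf] by auto
      ultimately show "x \<in> sum w ` Pow (edges2 V)" by auto
    qed
    show "sum w ` Pow (edges2 V) \<subseteq> (\<Union>E\<in>Pow (edges2 V). wsums (wprodset {indg V E} {(V, w)}))"
    proof clarify
      fix E assume E: "E \<subseteq> edges2 V"
      have "wsum (wprod (indg V E) (V, w) id) \<in> wsums (wprodset {indg V E} {(V, w)})"
        unfolding wsums_def wprodset_def wprods_def by (auto simp: fstI)
      moreover have "wsum (wprod (indg V E) (V, w) id) = sum w E"
        using subset_sum_f[of id V E w] E assms(1) by simp
      ultimately show "sum w E \<in> (\<Union>E\<in>Pow (edges2 V). wsums (wprodset {indg V E} {(V, w)}))"
        using E by auto
    qed
  qed
  with S show ?thesis by simp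
qed

end
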